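(* Let $V\in C^2(\mathbb{R})$ be even with $V(s)\ge As^2-B$ for all $s\in\mathbb{R}$ (some $A>0$, $B\in\mathbb{R}$) and $V''(s)\le C_2$ for all $s$ (some $C_2>0$). Then there exists a constant $C>0$ such that for every $x\in\mathbb{Z}^d$, every $\gamma\in\mathbb{R}$, every $\xi(x)\in\mathbb{R}$ and every choice of real values $\phi(y)$ for the $2d$ nearest neighbours $y$ of $x$, $$\int_{\mathbb{R}}\exp\Big[-\tfrac12\sum_{y\in\mathbb{Z}^d,|y-x|=1}V(\phi(y)-\phi(x))+\xi(x)\phi(x)\Big]\mathrm{d}\phi(x)\ \ge\ C\exp\Big[-\tfrac12\sum_{y\in\mathbb{Z}^d,|y-x|=1}V(\phi(y)-\gamma)+\xi(x)\gamma\Big].$$ *)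

theory Defs
  imports "HOL-Analysis.Analysis"
begin

definition nbrs :: "int ^ 'd \<Rightarrow> (int ^ 'd) set" where
  "nbrs x = {y. sqrt (\<Sum>i\<in>UNIV. (real_of_int (y $ i - x $ i))\<^sup>2) = 1}"

end

theory Submission
  imports Defs
begin

lemma second_diff:
  fixes V :: "real \<Rightarrow> real"
  assumes diff1: "\<forall>s. V differentiable (at s)"
    and diff2: "\<forall>s. deriv V differentiable (at s)"
    and upper2: "\<forall>s. deriv (deriv V) s \<le> C2"
  shows "V (s + h) + V (s - h) \<le> 2 * V s + C2 * h\<^sup>2"
proof -
  define D where "D = (\<lambda>m::nat. if m = 0 then V else if m = 1 then deriv V else deriv (deriv V))"
  have DER: "\<forall>m t. m < 2 \<and> a \<le> t \<and> t \<le> b \<longrightarrow> DERIV (D m) t :> D (Suc m) t" for a b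
    using diff1 diff2 by (auto simp: D_def DERIV_deriv_iff_real_differentiable less_2_cases_iff)
  have tay: "\<exists>t. V x \<le> V s + deriv V s * (x - s) + C2 / 2 * (x - s)^2" for x
  proof (cases "x = s")
    case True then show ?thesis by simp
  next
    case False
    from Taylor[of 2 D V "min x s" "max x s" s x, OF _ _ DER] False
    obtain t where "V x = (\<Sum>m<2. (D m s / fact m) * (x - s)^m) + (D 2 t / fact 2) * (x - s)^2"
      by (auto simp: D_def)
    then have "V x = V s + deriv V s * (x - s) + deriv (deriv V) t / 2 * (x - s)^2"
      by (simp add: D_def numeral_2_eq_2)
    moreover have "deriv (deriv V) t / 2 * (x - s)^2 \<le> C2 / 2 * (x - s)^2"
      using upper2 by (intro mult_right_mono) auto
    ultimately show ?thesis by auto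
  qed
  from tay[of "s + h"] tay[of "s - h"] show ?thesis
    by (simp add: power2_eq_square algebra_simps)
qed

lemma core:
  fixes V :: "real \<Rightarrow> real" and S :: "'a set" and \<phi> :: "'a \<Rightarrow> real"
  assumes diff1: "\<forall>s. V differentiable (at s)"
    and diff2: "\<forall>s. deriv V differentiable (at s)"
    and C2_pos: "C2 > 0"
    and upper2: "\<forall>s. deriv (deriv V) s \<le> C2"
  shows "(\<integral>\<^sup>+ t. ennreal (exp (- (1/2) * (\<Sum>y\<in>S. V (\<phi> y - t)) + \<xi> * t)) \<partial>lborel)
           \<ge> ennreal (exp (- (real (card S) * C2 / 4)) * exp (- (1/2) * (\<Sum>y\<in>S. V (\<phi> y - \<gamma>)) + \<xi> * \<gamma>))"
proof -
  define F where "F = (\<lambda>t. - (1/2) * (\<Sum>y\<in>S. V (\<phi> y - t)) + \<xi> * t)"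
  define K where "K = real (card S) * C2 / 4"
  have Vc: "continuous_on UNIV V"
    using diff1 by (intro continuous_at_imp_continuous_on) (auto intro: differentiable_imp_continuous_within)
  have Fc: "continuous_on UNIV (\<lambda>h. F (a + b * h))" for a b
    unfolding F_def
    by (intro continuous_intros continuous_on_compose2[OF Vc]) auto
  have meas: "(\<lambda>h. ennreal (exp (F (a + b * h)))) \<in> borel_measurable borel" for a b
  proof -
    have "(\<lambda>h. exp (F (a + b * h))) \<in> borel_measurable borel"
      by (intro borel_measurable_continuous_onI continuous_intros Fc)
    then show ?thesis by measurable
  qed
  have meas0: "(\<lambda>h. ennreal (exp (F h))) \<in> borel_measurable borel"
    using meas[of 0 1] by simp
  define I where "I = (\<integral>\<^sup>+ t. ennreal (exp (F t)) \<partial>lborel)"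
  have I1: "I = (\<integral>\<^sup>+ h. ennreal (exp (F (\<gamma> + h))) \<partial>lborel)"
    unfolding I_def using nn_integral_real_affine[OF meas0, of 1 \<gamma>] by simp
  have I2: "I = (\<integral>\<^sup>+ h. ennreal (exp (F (\<gamma> + (-1) * h))) \<partial>lborel)"
    unfolding I_def using nn_integral_real_affine[OF meas0, of "-1" \<gamma>] by (simp only: abs_minus_cancel abs_one ennreal_1 mult_1)
  have pt: "exp (F (\<gamma> + h)) + exp (F (\<gamma> + (-1) * h)) \<ge> 2 * exp (F \<gamma> - K * h\<^sup>2)" for h
  proof -
    have "(\<Sum>y\<in>S. V (\<phi> y - (\<gamma> + h)) + V (\<phi> y - (\<gamma> + (-1) * h)))
          \<le> (\<Sum>y\<in>S. 2 * V (\<phi> y - \<gamma>) + C2 * h\<^sup>2)"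
    proof (rule sum_mono)
      fix y
      show "V (\<phi> y - (\<gamma> + h)) + V (\<phi> y - (\<gamma> + (-1) * h)) \<le> 2 * V (\<phi> y - \<gamma>) + C2 * h\<^sup>2"
        using second_diff[OF diff1 diff2 upper2, of "\<phi> y - \<gamma>" "-h"] by (simp add: algebra_simps)
    qed
    then have "(\<Sum>y\<in>S. V (\<phi> y - (\<gamma> + h))) + (\<Sum>y\<in>S. V (\<phi> y - (\<gamma> + (-1) * h)))
          \<le> 2 * (\<Sum>y\<in>S. V (\<phi> y - \<gamma>)) + real (card S) * C2 * h\<^sup>2"
      by (simp add: sum.distrib sum_distrib_left)
    then have le: "F \<gamma> - K * h\<^sup>2 \<le> (F (\<gamma> + h) + F (\<gamma> + (-1) * h)) / 2"
      unfolding F_def K_def by (simp add: algebra_simps)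
    define a where "a = F (\<gamma> + h)"
    define b where "b = F (\<gamma> + (-1) * h)"
    have "2 * exp ((a + b) / 2) \<le> exp a + exp b"
    proof -
      have "0 \<le> (exp (a/2) - exp (b/2))\<^sup>2" by simp
      also have "\<dots> = exp a + exp b - 2 * exp ((a + b) / 2)"
        by (simp add: power2_eq_square algebra_simps flip: exp_add)
      finally show ?thesis by simp
    qed
    moreover have "exp (F \<gamma> - K * h\<^sup>2) \<le> exp ((a + b) / 2)"
      using le unfolding a_def b_def by simp
    ultimately show ?thesis unfolding a_def b_def by linarith
  qed
  have "K \<ge> 0" unfolding K_def using C2_pos by simp
  have m1: "(\<lambda>h. exp (F (\<gamma> + h))) \<in> borel_measurable borel"
  proof -
    have c: "continuous_on UNIV (\<lambda>h. F (\<gamma> + h))" using Fc[of \<gamma> 1] by simp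
    show ?thesis by (intro borel_measurable_continuous_onI continuous_on_exp c)
  qed
  have m2: "(\<lambda>h. exp (F (\<gamma> + (-1) * h))) \<in> borel_measurable borel"
    by (intro borel_measurable_continuous_onI continuous_on_exp Fc)
  have addI: "(\<integral>\<^sup>+ h. ennreal (exp (F (\<gamma> + h))) + ennreal (exp (F (\<gamma> + (-1) * h))) \<partial>lborel)
     = (\<integral>\<^sup>+ h. ennreal (exp (F (\<gamma> + h))) \<partial>lborel) + (\<integral>\<^sup>+ h. ennreal (exp (F (\<gamma> + (-1) * h))) \<partial>lborel)"
    by (rule nn_integral_add)
       (simp_all only: measurable_lborel2 measurable_compose[OF m1 measurable_ennreal] measurable_compose[OF m2 measurable_ennreal] o_def)
  have "2 * I = I + I" by (rule mult_2)
  also have "\<dots> = (\<integral>\<^sup>+ h. ennreal (exp (F (\<gamma> + h))) + ennreal (exp (F (\<gamma> + (-1) * h))) \<partial>lborel)"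
    unfolding addI by (rule arg_cong2[where f="(+)", OF I1 I2])
  also have "\<dots> \<ge> (\<integral>\<^sup>+ h. ennreal (2 * exp (F \<gamma> - K)) * indicator {0..1::real} h \<partial>lborel)"
  proof (rule nn_integral_mono)
    fix h :: real
    show "ennreal (2 * exp (F \<gamma> - K)) * indicator {0..1} h
          \<le> ennreal (exp (F (\<gamma> + h))) + ennreal (exp (F (\<gamma> + (-1) * h)))"
    proof (cases "h \<in> {0..1}")
      case True
      then have "h\<^sup>2 \<le> 1" by (simp add: power_le_one)
      then have "K * h\<^sup>2 \<le> K" using \<open>K \<ge> 0\<close> by (simp add: mult_left_le)
      then have "2 * exp (F \<gamma> - K) \<le> 2 * exp (F \<gamma> - K * h\<^sup>2)" by simp
      also have "\<dots> \<le> exp (F (\<gamma> + h)) + exp (F (\<gamma> + (-1) * h))" by (rule pt)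
      finally have le2: "2 * exp (F \<gamma> - K) \<le> exp (F (\<gamma> + h)) + exp (F (\<gamma> + (-1) * h))" .
      have "ennreal (2 * exp (F \<gamma> - K)) * indicator {0..1} h = ennreal (2 * exp (F \<gamma> - K))"
        using True by (simp add: indicator_def)
      also have "\<dots> \<le> ennreal (exp (F (\<gamma> + h)) + exp (F (\<gamma> + (-1) * h)))"
        using le2 by (rule ennreal_leI)
      also have "\<dots> = ennreal (exp (F (\<gamma> + h))) + ennreal (exp (F (\<gamma> + (-1) * h)))"
        by (rule ennreal_plus) simp_all
      finally show ?thesis .
    qed simp
  qed
  also have "(\<integral>\<^sup>+ h. ennreal (2 * exp (F \<gamma> - K)) * indicator {0..1::real} h \<partial>lborel) = ennreal (2 * exp (F \<gamma> - K))"
    by (simp add: nn_integral_cmult_indicator)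
  finally have "ennreal (2 * exp (F \<gamma> - K)) \<le> 2 * I" .
  then have "2 * ennreal (exp (F \<gamma> - K)) \<le> 2 * I"
    by (simp only: ennreal_mult' ennreal_numeral[symmetric])
  then have "ennreal (exp (F \<gamma> - K)) \<le> I"
    by (subst (asm) ennreal_mult_le_mult_iff) auto
  moreover have "exp (F \<gamma> - K) = exp (- K) * exp (F \<gamma>)" by (simp add: exp_diff exp_minus field_simps)
  ultimately show ?thesis unfolding I_def F_def K_def by simp
qed

theorem lemma3p1:
  fixes V :: "real \<Rightarrow> real" and A B C2 :: real
  assumes diff1: "\<forall>s. V differentiable (at s)"
    and diff2: "\<forall>s. deriv V differentiable (at s)"
    and cont2: "continuous_on UNIV (deriv (deriv V))"
    and even: "\<forall>s. V (- s) = V s"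
    and A_pos: "A > 0"
    and lower: "\<forall>s. V s \<ge> A * s\<^sup>2 - B"
    and C2_pos: "C2 > 0"
    and upper2: "\<forall>s. deriv (deriv V) s \<le> C2"
  shows "\<exists>C > 0. \<forall>(x :: int ^ 'd) (\<gamma> :: real) (\<xi> :: real) (\<phi> :: int ^ 'd \<Rightarrow> real).
           (\<integral>\<^sup>+ t. ennreal (exp (- (1/2) * (\<Sum>y\<in>nbrs x. V (\<phi> y - t)) + \<xi> * t)) \<partial>lborel)
           \<ge> ennreal (C * exp (- (1/2) * (\<Sum>y\<in>nbrs x. V (\<phi> y - \<gamma>)) + \<xi> * \<gamma>))"
proof -
  define N where "N = card (nbrs (0 :: int ^ 'd))"
  have tr: "nbrs x = (\<lambda>z. z + x) ` nbrs (0 :: int ^ 'd)" for x :: "int ^ 'd"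
  proof -
    have *: "y \<in> nbrs x \<longleftrightarrow> y - x \<in> nbrs 0" for y
      by (simp add: nbrs_def)
    show ?thesis
    proof
      show "nbrs x \<subseteq> (\<lambda>z. z + x) ` nbrs 0"
      proof
        fix y assume "y \<in> nbrs x"
        then have "y - x \<in> nbrs 0" using * by blast
        moreover have "y = (y - x) + x" by simp
        ultimately show "y \<in> (\<lambda>z. z + x) ` nbrs 0" by (rule rev_image_eqI)
      qed
      show "(\<lambda>z. z + x) ` nbrs 0 \<subseteq> nbrs x" using * by auto
    qed
  qed
  have cardx: "card (nbrs x) = N" for x :: "int ^ 'd"
    unfolding N_def by (subst tr) (rule card_image, simp add: inj_on_def)
  show ?thesis
  proof (intro exI[of _ "exp (- (real N * C2 / 4))"] conjI allI)
    fix x :: "int ^ 'd" and \<gamma> \<xi> :: real and \<phi> :: "int ^ 'd \<Rightarrow> real"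
    show "(\<integral>\<^sup>+ t. ennreal (exp (- (1/2) * (\<Sum>y\<in>nbrs x. V (\<phi> y - t)) + \<xi> * t)) \<partial>lborel)
           \<ge> ennreal (exp (- (real N * C2 / 4)) * exp (- (1/2) * (\<Sum>y\<in>nbrs x. V (\<phi> y - \<gamma>)) + \<xi> * \<gamma>))"
      using core[OF diff1 diff2 C2_pos upper2, of "nbrs x" \<phi> \<gamma> \<xi>] by (simp only: cardx)
  qed simp
qed

end
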